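(* Let $G=(V,E)$ be a simple undirected graph with all degrees $d_i>0$, degree matrix $\mathbf{D}$, adjacency matrix $\mathbf{A}$, and $\mathbf{P}=\mathbf{A}\mathbf{D}^{-1}$. Let $t>0$, $N\ge 1$ an integer, $\mathbf{s}$ a stochastic vector, and $T_N(t\mathbf{P})=\sum_{k=0}^N\tfrac{t^k}{k!}\mathbf{P}^k$. For $k=0,\dots,N$ define the polynomial $\psi_k(x)=\sum_{m=0}^{N-k}\frac{k!}{(m+k)!}x^m$, evaluated at a matrix in the usual way. Then at any step of hk-relax, the solution vector $\mathbf{y}$ and the residual blocks $\mathbf{r}_0,\dots,\mathbf{r}_N$ satisfy $$T_N(t\mathbf{P})\mathbf{s}-\mathbf{y}=\sum_{k=0}^N\psi_k(t\mathbf{P})\mathbf{r}_k.$$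
   Context: Let $\mathbf{S}$ be the $(N+1)\times(N+1)$ matrix of zeros with first subdiagonal $[\tfrac11,\tfrac12,\dots,\tfrac1N]$, and consider the linear system $(\mathbf{I}-\mathbf{S}\otimes(t\mathbf{P}))\mathbf{v}=\mathbf{e}_1\otimes\mathbf{s}$, whose exact solution has blocks $\mathbf{v}_k=\tfrac{t^k}{k!}\mathbf{P}^k\mathbf{s}$, $k=0,\dots,N$. hk-relax maintains an approximate solution $\hat{\mathbf{v}}=[\hat{\mathbf{v}}_0;\dots;\hat{\mathbf{v}}_N]$ (initially zero) with $\mathbf{y}=\sum_{k=0}^N\hat{\mathbf{v}}_k$, and residual $\mathbf{r}=[\mathbf{r}_0;\dots;\mathbf{r}_N]=\mathbf{e}_1\otimes\mathbf{s}-(\mathbf{I}-\mathbf{S}\otimes(t\mathbf{P}))\hat{\mathbf{v}}$ (initially $\mathbf{e}_1\otimes\mathbf{s}$). Writing $r(i,j)$ for the entry of node $i$ in block $j$, a step chooses an entry $r(i,j)$, adds it to entry $i$ of $\hat{\mathbf{v}}_j$ (hence to $y_i$), sets $r(i,j)=0$, and, if $j<N$, adds $r(i,j)\tfrac{t}{j+1}\mathbf{P}\mathbf{e}_i$ to block $\mathbf{r}_{j+1}$. *)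

theory Defs
  imports Complex_Main
begin

text \<open>Graphs on the vertex set {0..<n}; vectors are functions nat => real (entries i < n
  are meaningful), matrices are functions nat => nat => real (entries i,j < n).\<close>

definition simple_graph :: "nat \<Rightarrow> (nat \<Rightarrow> nat \<Rightarrow> bool) \<Rightarrow> bool" where
  "simple_graph n E \<longleftrightarrow> (\<forall>i<n. \<forall>j<n. E i j \<longleftrightarrow> E j i) \<and> (\<forall>i<n. \<not> E i i)"

definition degree :: "nat \<Rightarrow> (nat \<Rightarrow> nat \<Rightarrow> bool) \<Rightarrow> nat \<Rightarrow> nat" where
  "degree n E i = card {j. j < n \<and> E i j}"

definition adj_mat :: "(nat \<Rightarrow> nat \<Rightarrow> bool) \<Rightarrow> nat \<Rightarrow> nat \<Rightarrow> real" where
  "adj_mat E i j = (if E i j then 1 else 0)"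

definition walk_mat :: "nat \<Rightarrow> (nat \<Rightarrow> nat \<Rightarrow> bool) \<Rightarrow> nat \<Rightarrow> nat \<Rightarrow> real" where
  "walk_mat n E i j = adj_mat E i j / real (degree n E j)"

definition mat_mult :: "nat \<Rightarrow> (nat \<Rightarrow> nat \<Rightarrow> real) \<Rightarrow> (nat \<Rightarrow> nat \<Rightarrow> real) \<Rightarrow> nat \<Rightarrow> nat \<Rightarrow> real" where
  "mat_mult n M M' i j = (\<Sum>k<n. M i k * M' k j)"

definition mat_id :: "nat \<Rightarrow> nat \<Rightarrow> real" where
  "mat_id i j = (if i = j then 1 else 0)"

fun mat_pow :: "nat \<Rightarrow> (nat \<Rightarrow> nat \<Rightarrow> real) \<Rightarrow> nat \<Rightarrow> nat \<Rightarrow> nat \<Rightarrow> real" where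
  "mat_pow n M 0 = mat_id"
| "mat_pow n M (Suc m) = mat_mult n (mat_pow n M m) M"

definition mat_vec :: "nat \<Rightarrow> (nat \<Rightarrow> nat \<Rightarrow> real) \<Rightarrow> (nat \<Rightarrow> real) \<Rightarrow> nat \<Rightarrow> real" where
  "mat_vec n M x i = (\<Sum>j<n. M i j * x j)"

definition taylor_mat :: "nat \<Rightarrow> nat \<Rightarrow> real \<Rightarrow> (nat \<Rightarrow> nat \<Rightarrow> real) \<Rightarrow> nat \<Rightarrow> nat \<Rightarrow> real" where
  "taylor_mat n N t P i j = (\<Sum>k=0..N. t ^ k / fact k * mat_pow n P k i j)"

definition psi_mat :: "nat \<Rightarrow> nat \<Rightarrow> nat \<Rightarrow> (nat \<Rightarrow> nat \<Rightarrow> real) \<Rightarrow> nat \<Rightarrow> nat \<Rightarrow> real" where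
  "psi_mat n N k X i j = (\<Sum>m=0..N-k. fact k / fact (m + k) * mat_pow n X m i j)"

text \<open>States of hk-relax: (y, vhat, r) with vhat j i = entry i of block j, r j i = r(i,j).\<close>
type_synonym hk_state = "(nat \<Rightarrow> real) \<times> (nat \<Rightarrow> nat \<Rightarrow> real) \<times> (nat \<Rightarrow> nat \<Rightarrow> real)"

definition hk_init :: "(nat \<Rightarrow> real) \<Rightarrow> hk_state" where
  "hk_init s = ((\<lambda>_. 0), (\<lambda>_ _. 0), (\<lambda>j. if j = 0 then s else (\<lambda>_. 0)))"

definition hk_step :: "nat \<Rightarrow> (nat \<Rightarrow> nat \<Rightarrow> real) \<Rightarrow> real \<Rightarrow> nat \<Rightarrow> nat \<Rightarrow> nat \<Rightarrow> hk_state \<Rightarrow> hk_state" where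
  "hk_step n P t N i j st = (case st of (y, v, r) \<Rightarrow>
     (let \<rho> = r j i;
          y' = y(i := y i + \<rho>);
          v' = v(j := (v j)(i := v j i + \<rho>));
          r1 = r(j := (r j)(i := 0));
          r' = (if j < N then r1(j + 1 := (\<lambda>k. r1 (j + 1) k + \<rho> * (t / real (j + 1)) * P k i))
                else r1)
      in (y', v', r')))"

inductive hk_reach :: "nat \<Rightarrow> (nat \<Rightarrow> nat \<Rightarrow> real) \<Rightarrow> real \<Rightarrow> nat \<Rightarrow> (nat \<Rightarrow> real) \<Rightarrow> hk_state \<Rightarrow> bool"
  for n P t N s where
  init: "hk_reach n P t N s (hk_init s)"
| step: "hk_reach n P t N s st \<Longrightarrow> i < n \<Longrightarrow> j \<le> N \<Longrightarrow> hk_reach n P t N s (hk_step n P t N i j st)"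

end

theory Submission
  imports Defs
begin

lemma pow_scale: "mat_pow n (\<lambda>a b. t * P a b) m a b = t ^ m * mat_pow n P m a b"
proof (induction m arbitrary: b)
  case 0 then show ?case by simp
next
  case (Suc m)
  show ?case by (simp add: mat_mult_def Suc sum_distrib_left algebra_simps)
qed

lemma psi0_taylor: "psi_mat n N 0 (\<lambda>a b. t * P a b) a b = taylor_mat n N t P a b"
  unfolding psi_mat_def taylor_mat_def by (simp add: pow_scale)

lemma psiN: "psi_mat n N N X a b = mat_id a b"
  unfolding psi_mat_def by simp

lemma psi_rec:
  assumes "j < N"
  shows "psi_mat n N j X a b = mat_id a b
     + (1 / real (Suc j)) * (\<Sum>k<n. psi_mat n N (Suc j) X a k * X k b)"
proof -
  define f where "f m = fact j / fact (m + j) * mat_pow n X m a b" for m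
  have e: "N - j = Suc (N - Suc j)" using assms by simp
  have "psi_mat n N j X a b = (\<Sum>m\<le>N - j. f m)"
    unfolding psi_mat_def f_def by (simp add: atLeast0AtMost)
  also have "\<dots> = f 0 + (\<Sum>m\<le>N - Suc j. f (Suc m))"
    unfolding e by (rule sum.atMost_Suc_shift)
  also have "f 0 = mat_id a b" unfolding f_def by simp
  also have "(\<Sum>m\<le>N - Suc j. f (Suc m)) =
     (1 / real (Suc j)) * (\<Sum>k<n. psi_mat n N (Suc j) X a k * X k b)"
  proof -
    have "(\<Sum>k<n. psi_mat n N (Suc j) X a k * X k b)
      = (\<Sum>k<n. \<Sum>m\<le>N - Suc j. fact (Suc j) / fact (m + Suc j) * mat_pow n X m a k * X k b)"
      unfolding psi_mat_def by (simp add: atLeast0AtMost sum_distrib_right)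
    also have "\<dots> = (\<Sum>m\<le>N - Suc j. \<Sum>k<n. fact (Suc j) / fact (m + Suc j) * mat_pow n X m a k * X k b)"
      by (rule sum.swap)
    also have "\<dots> = (\<Sum>m\<le>N - Suc j. fact (Suc j) / fact (m + Suc j) * mat_pow n X (Suc m) a b)"
      by (simp add: mat_mult_def sum_distrib_left mult.assoc)
    finally have h: "(\<Sum>k<n. psi_mat n N (Suc j) X a k * X k b) = \<dots>" .
    show ?thesis unfolding h f_def sum_distrib_left
    proof (rule sum.cong[OF refl])
      fix m
      have "fact (Suc j) = real (Suc j) * fact j" by (simp add: fact_Suc)
      moreover have "Suc m + j = m + Suc j" by simp
      ultimately show "fact j / fact (Suc m + j) * mat_pow n X (Suc m) a b =
        1 / real (Suc j) * (fact (Suc j) / fact (m + Suc j) * mat_pow n X (Suc m) a b)"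
        by (simp del: fact_Suc of_nat_Suc mat_pow.simps)
    qed
  qed
  finally show ?thesis .
qed

lemma invariant:
  assumes "hk_reach n P t N s st"
  shows "\<forall>a<n. mat_vec n (taylor_mat n N t P) s a - fst st a
           = (\<Sum>k=0..N. mat_vec n (psi_mat n N k (\<lambda>a b. t * P a b)) (snd (snd st) k) a)"
  using assms
proof (induction rule: hk_reach.induct)
  case init
  show ?case
  proof (intro allI impI)
    fix a assume "a < n"
    have "(\<Sum>k=0..N. mat_vec n (psi_mat n N k (\<lambda>a b. t * P a b)) (snd (snd (hk_init s)) k) a)
       = (\<Sum>k=0..N. if k = 0 then mat_vec n (psi_mat n N 0 (\<lambda>a b. t * P a b)) s a else 0)"
      by (rule sum.cong) (auto simp: hk_init_def mat_vec_def)
    also have "\<dots> = mat_vec n (taylor_mat n N t P) s a"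
      by (simp add: mat_vec_def psi0_taylor)
    finally show "mat_vec n (taylor_mat n N t P) s a - fst (hk_init s) a = (\<Sum>k=0..N. mat_vec n (psi_mat n N k (\<lambda>a b. t * P a b)) (snd (snd (hk_init s)) k) a)"
      by (simp add: hk_init_def)
  qed
next
  case (step st i j)
  obtain y v r where st: "st = (y, v, r)" by (cases st) auto
  define \<rho> where "\<rho> = r j i"
  define X where "X = (\<lambda>a b. t * P a b)"
  define \<psi> where "\<psi> k a b = psi_mat n N k X a b" for k a b
  define r' where "r' = snd (snd (hk_step n P t N i j st))"
  have yn: "fst (hk_step n P t N i j st) = y(i := y i + \<rho>)"
    by (simp add: hk_step_def st \<rho>_def Let_def)
  have r'eq: "r' k b = r k b - (if k = j \<and> b = i then \<rho> else 0)
      + (if j < N \<and> k = Suc j then \<rho> * (t / real (Suc j)) * P b i else 0)" for k b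
    by (auto simp: r'_def hk_step_def st \<rho>_def Let_def)
  show ?case
  proof (intro allI impI)
    fix a assume a: "a < n"
    have IH: "mat_vec n (taylor_mat n N t P) s a - y a
       = (\<Sum>k=0..N. \<Sum>b<n. \<psi> k a b * r k b)"
      using step.IH a by (simp add: st mat_vec_def \<psi>_def X_def)
    have S1: "(\<Sum>k=0..N. \<Sum>b<n. \<psi> k a b * (if k = j \<and> b = i then \<rho> else 0))
        = \<psi> j a i * \<rho>"
    proof -
      have "(\<Sum>k=0..N. \<Sum>b<n. \<psi> k a b * (if k = j \<and> b = i then \<rho> else 0))
          = (\<Sum>k=0..N. if k = j then \<psi> k a i * \<rho> else 0)"
        by (rule sum.cong) (auto simp: step.hyps if_distrib cong: if_cong)
      also have "\<dots> = \<psi> j a i * \<rho>" using step.hyps by simp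
      finally show ?thesis .
    qed
    have S2: "(\<Sum>k=0..N. \<Sum>b<n. \<psi> k a b *
          (if j < N \<and> k = Suc j then \<rho> * (t / real (Suc j)) * P b i else 0))
        = (if j < N then \<rho> * (1 / real (Suc j)) * (\<Sum>b<n. \<psi> (Suc j) a b * X b i) else 0)"
    proof (cases "j < N")
      case True
      have "(\<Sum>k=0..N. \<Sum>b<n. \<psi> k a b *
          (if j < N \<and> k = Suc j then \<rho> * (t / real (Suc j)) * P b i else 0))
        = (\<Sum>k=0..N. if k = Suc j then (\<Sum>b<n. \<psi> k a b * (\<rho> * (t / real (Suc j)) * P b i)) else 0)"
        by (rule sum.cong) (auto simp: True)
      also have "\<dots> = (\<Sum>b<n. \<psi> (Suc j) a b * (\<rho> * (t / real (Suc j)) * P b i))"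
        using True by simp
      also have "\<dots> = \<rho> * (1 / real (Suc j)) * (\<Sum>b<n. \<psi> (Suc j) a b * X b i)"
        by (simp add: sum_distrib_left X_def field_simps)
      finally show ?thesis using True by simp
    qed simp
    have key: "\<psi> j a i * \<rho> - (if j < N then \<rho> * (1 / real (Suc j)) * (\<Sum>b<n. \<psi> (Suc j) a b * X b i) else 0)
        = \<rho> * mat_id a i"
    proof (cases "j < N")
      case True
      show ?thesis using psi_rec[OF True, of n X a i] True by (simp add: \<psi>_def algebra_simps)
    next
      case False
      then have "j = N" using step.hyps by simp
      then show ?thesis using False by (simp add: \<psi>_def psiN)
    qed
    have "(\<Sum>k=0..N. mat_vec n (psi_mat n N k X) (r' k) a)
        = (\<Sum>k=0..N. \<Sum>b<n. \<psi> k a b * r k b)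
          - (\<Sum>k=0..N. \<Sum>b<n. \<psi> k a b * (if k = j \<and> b = i then \<rho> else 0))
          + (\<Sum>k=0..N. \<Sum>b<n. \<psi> k a b *
              (if j < N \<and> k = Suc j then \<rho> * (t / real (Suc j)) * P b i else 0))"
      unfolding mat_vec_def \<psi>_def[symmetric] r'eq
      by (simp add: algebra_simps sum.distrib sum_subtractf)
    also have "\<dots> = mat_vec n (taylor_mat n N t P) s a - y a - \<rho> * mat_id a i"
      using IH S1 S2 key by simp
    also have "\<dots> = mat_vec n (taylor_mat n N t P) s a - (y(i := y i + \<rho>)) a"
      by (simp add: mat_id_def)
    finally show "mat_vec n (taylor_mat n N t P) s a - fst (hk_step n P t N i j st) a
        = (\<Sum>k=0..N. mat_vec n (psi_mat n N k (\<lambda>a b. t * P a b)) (snd (snd (hk_step n P t N i j st)) k) a)"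
      by (simp add: yn r'_def X_def)
  qed
qed

theorem lemma1:
  fixes n N :: nat and E :: "nat \<Rightarrow> nat \<Rightarrow> bool" and t :: real and s :: "nat \<Rightarrow> real"
    and y :: "nat \<Rightarrow> real" and v r :: "nat \<Rightarrow> nat \<Rightarrow> real"
  assumes "simple_graph n E"
    and "\<forall>i<n. degree n E i > 0"
    and "t > 0" and "N \<ge> 1"
    and "\<forall>i<n. s i \<ge> 0" and "(\<Sum>i<n. s i) = 1"
    and "hk_reach n (walk_mat n E) t N s (y, v, r)"
  shows "\<forall>i<n. mat_vec n (taylor_mat n N t (walk_mat n E)) s i - y i
           = (\<Sum>k=0..N. mat_vec n (psi_mat n N k (\<lambda>a b. t * walk_mat n E a b)) (r k) i)"
  using invariant[OF assms(7)] by simp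

end
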